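(* Let $A$ be a prime ring which satisfies the ascending chain condition on prime ideals (every ascending chain of prime ideals of $A$ stabilizes). Then $A$ is Hopfian.
   Context: A ring $A$ is \emph{Hopfian} if $A$ is not isomorphic (as a ring) to $A/J$ for any nonzero two-sided ideal $J \triangleleft A$. *)

theory Defs
  imports "HOL-Algebra.Algebra"
begin

definition nc_prime_ideal :: "'a set \<Rightarrow> ('a, 'b) ring_scheme \<Rightarrow> bool" where
  "nc_prime_ideal P R \<longleftrightarrow> ideal P R \<and> P \<noteq> carrier R \<and>
     (\<forall>I J. ideal I R \<longrightarrow> ideal J R \<longrightarrow> ideal_prod R I J \<subseteq> P \<longrightarrow> I \<subseteq> P \<or> J \<subseteq> P)"

definition prime_ring :: "('a, 'b) ring_scheme \<Rightarrow> bool" where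
  "prime_ring R \<longleftrightarrow> ring R \<and> nc_prime_ideal {\<zero>\<^bsub>R\<^esub>} R"

definition acc_prime_ideals :: "('a, 'b) ring_scheme \<Rightarrow> bool" where
  "acc_prime_ideals R \<longleftrightarrow>
     (\<forall>P :: nat \<Rightarrow> 'a set. (\<forall>n. nc_prime_ideal (P n) R) \<longrightarrow> (\<forall>n. P n \<subseteq> P (Suc n)) \<longrightarrow>
        (\<exists>N. \<forall>n\<ge>N. P n = P N))"

definition hopfian :: "('a, 'b) ring_scheme \<Rightarrow> bool" where
  "hopfian R \<longleftrightarrow> (\<forall>J. ideal J R \<longrightarrow> J \<noteq> {\<zero>\<^bsub>R\<^esub>} \<longrightarrow> \<not> (R \<simeq> R Quot J))"

end

theory Submission
  imports Defs
begin
lemma img_ideal: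
  fixes A (structure)
  assumes R: "ring A" and g: "g \<in> ring_hom A A" and sur: "g ` carrier A = carrier A" and I: "ideal I A"
  shows "ideal (g ` I) A"
proof -
  interpret ring A by fact
  interpret h: ring_hom_ring A A g using g R by (simp add: ring_hom_ringI2)
  interpret I: ideal I A by fact
  have sub: "I \<subseteq> carrier A" using I.Icarr by blast
  show ?thesis
  proof (rule idealI[OF R])
    show "subgroup (g ` I) (add_monoid A)"
    proof (rule add.subgroupI)
      show "g ` I \<subseteq> carrier A" using sub h.hom_closed by auto
      show "g ` I \<noteq> {}" using I.zero_closed by blast
      fix a assume "a \<in> g ` I"
      then obtain x where x: "x \<in> I" "a = g x" by blast
      have "\<ominus> x \<in> I" using x by (simp add: I.a_inv_closed)
      moreover have "g (\<ominus> x) = \<ominus> a" using x sub by auto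
      ultimately show "\<ominus> a \<in> g ` I" by (metis image_eqI)
    next
      fix a b assume "a \<in> g ` I" "b \<in> g ` I"
      then obtain x y where x: "x \<in> I" "a = g x" "y \<in> I" "b = g y" by blast
      have "x \<oplus> y \<in> I" using x by (simp add: I.a_closed)
      moreover have "g (x \<oplus> y) = a \<oplus> b" using x sub by auto
      ultimately show "a \<oplus> b \<in> g ` I" by (metis image_eqI)
    qed
  next
    fix a z assume "a \<in> g ` I" "z \<in> carrier A"
    then obtain x y where x: "x \<in> I" "a = g x" "y \<in> carrier A" "z = g y" using sur by blast
    have "y \<otimes> x \<in> I" "x \<otimes> y \<in> I" using x by (auto simp: I.I_l_closed I.I_r_closed)
    moreover have "g (y \<otimes> x) = z \<otimes> a" "g (x \<otimes> y) = a \<otimes> z" using x sub by auto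
    ultimately show "z \<otimes> a \<in> g ` I" "a \<otimes> z \<in> g ` I" by (metis image_eqI)+
  qed
qed
lemma ker_prime:
  fixes A (structure)
  assumes P: "prime_ring A" and g: "g \<in> ring_hom A A" and sur: "g ` carrier A = carrier A"
  shows "nc_prime_ideal {x \<in> carrier A. g x = \<zero>\<^bsub>A\<^esub>} A"
proof -
  have R: "ring A" and P0: "nc_prime_ideal {\<zero>\<^bsub>A\<^esub>} A" using P by (auto simp: prime_ring_def)
  have P0': "\<And>I J. ideal I A \<Longrightarrow> ideal J A \<Longrightarrow> ideal_prod A I J \<subseteq> {\<zero>} \<Longrightarrow> I \<subseteq> {\<zero>} \<or> J \<subseteq> {\<zero>}"
    and P0c: "{\<zero>} \<noteq> carrier A" using P0 unfolding nc_prime_ideal_def by auto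
  interpret ring A by fact
  interpret h: ring_hom_ring A A g using g R by (simp add: ring_hom_ringI2)
  let ?K = "{x \<in> carrier A. g x = \<zero>}"
  have K: "ideal ?K A" using h.kernel_is_ideal by (simp only: a_kernel_def')
  have "\<one> \<noteq> \<zero>"
  proof
    assume e: "\<one> = \<zero>"
    have "x = \<zero>" if "x \<in> carrier A" for x
    proof -
      have "x = x \<otimes> \<one>" using that by simp
      also have "\<dots> = \<zero>" using that e by simp
      finally show ?thesis .
    qed
    hence "carrier A = {\<zero>}" by auto
    thus False using P0c by simp
  qed
  hence Kne: "?K \<noteq> carrier A" using h.hom_one by force
  have main: "I \<subseteq> ?K \<or> J \<subseteq> ?K" if I: "ideal I A" and J: "ideal J A" and IJ: "ideal_prod A I J \<subseteq> ?K" for I J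
  proof -
    have subI: "I \<subseteq> carrier A" using ideal.Icarr[OF I] by blast
    have subJ: "J \<subseteq> carrier A" using ideal.Icarr[OF J] by blast
    have "ideal_prod A (g ` I) (g ` J) \<subseteq> {\<zero>}"
    proof
      fix s assume "s \<in> ideal_prod A (g ` I) (g ` J)"
      then show "s \<in> {\<zero>}"
      proof (induct s rule: ideal_prod.induct)
        case (prod i j)
        then obtain x y where x: "x \<in> I" "i = g x" "y \<in> J" "j = g y" by blast
        have "x \<otimes> y \<in> ideal_prod A I J" using x by (simp add: ideal_prod.prod)
        hence "g (x \<otimes> y) = \<zero>" using IJ by auto
        moreover have "g (x \<otimes> y) = g x \<otimes> g y" using x subI subJ by (simp add: subsetD)
        ultimately show ?case using x by simp
      next
        case (sum s1 s2) thus ?case by auto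
      qed
    qed
    hence "g ` I \<subseteq> {\<zero>} \<or> g ` J \<subseteq> {\<zero>}"
      by (rule P0'[OF img_ideal[OF R g sur I] img_ideal[OF R g sur J]])
    thus ?thesis using subI subJ by auto
  qed
  show ?thesis unfolding nc_prime_ideal_def
    by (intro conjI K Kne allI impI main)
qed

lemma hopf_aux:
  fixes A (structure)
  assumes "prime_ring A"
    and "acc_prime_ideals A"
  shows "hopfian A"
proof -
  have R: "ring A" using assms(1) by (simp add: prime_ring_def)
  interpret ring A by fact
  show ?thesis unfolding hopfian_def
  proof (intro allI impI notI)
    fix J assume J: "ideal J A" and Jnz: "J \<noteq> {\<zero>}" and iso: "A \<simeq> A Quot J"
    interpret J: ideal J A by fact
    obtain h where h: "h \<in> ring_iso A (A Quot J)" using iso unfolding is_ring_iso_def by blast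
    have hhom: "h \<in> ring_hom A (A Quot J)" and hbij: "bij_betw h (carrier A) (carrier (A Quot J))"
      using h by (auto simp: ring_iso_def)
    have ih: "inv_into (carrier A) h \<in> ring_hom (A Quot J) A"
      using ring_iso_set_sym[OF R h] by (simp add: ring_iso_def)
    define f where "f = inv_into (carrier A) h \<circ> (\<lambda>x. J +> x)"
    have fhom: "f \<in> ring_hom A A" unfolding f_def by (rule ring_hom_trans[OF J.rcos_ring_hom ih])
    have pisur: "(\<lambda>x. J +> x) ` carrier A = carrier (A Quot J)"
      by (auto simp: FactRing_def A_RCOSETS_def')
    have fsur: "f ` carrier A = carrier A"
      unfolding f_def image_comp[symmetric] pisur
      using bij_betw_inv_into[OF hbij] by (simp add: bij_betw_def)
    have h0: "h \<zero> = J"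
    proof -
      have "h \<zero> = \<zero>\<^bsub>A Quot J\<^esub>"
        using ring_hom_zero[OF hhom R J.quotient_is_ring] .
      thus ?thesis by (simp add: FactRing_def)
    qed
    have fker: "f x = \<zero> \<longleftrightarrow> x \<in> J" if x: "x \<in> carrier A" for x
    proof
      assume fx: "f x = \<zero>"
      have c: "J +> x \<in> carrier (A Quot J)" using pisur x by blast
      have "h (f x) = J +> x" unfolding f_def using c hbij
        by (simp add: bij_betw_def f_inv_into_f)
      hence "J +> x = J" using fx h0 by simp
      thus "x \<in> J" using J.rcos_const_imp_mem x by blast
    next
      assume "x \<in> J"
      hence "J +> x = J" by (rule J.a_rcos_const)
      hence "f x = inv_into (carrier A) h (h \<zero>)" unfolding f_def using h0 by simp
      also have "\<dots> = \<zero>" using hbij by (simp add: bij_betw_def inv_into_f_f)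
      finally show "f x = \<zero>" .
    qed
    have f0: "f \<zero> = \<zero>" using fker J.additive_subgroup_axioms additive_subgroup.zero_closed by blast
    define F where "F n = f ^^ n" for n
    have Fhom: "F n \<in> ring_hom A A" for n
    proof (induct n)
      case 0 show ?case using id_ring_hom by (simp add: F_def id_def)
    next
      case (Suc n)
      have "f \<circ> F n \<in> ring_hom A A" by (rule ring_hom_trans[OF Suc fhom])
      thus ?case by (simp add: F_def comp_def)
    qed
    have Fsur: "F n ` carrier A = carrier A" for n
    proof (induct n)
      case 0 thus ?case by (simp add: F_def)
    next
      case (Suc n)
      have "F (Suc n) ` carrier A = f ` (F n ` carrier A)" by (simp add: F_def image_comp)
      thus ?case using Suc fsur by simp
    qed
    define P where "P n = {x \<in> carrier A. F n x = \<zero>}" for n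
    have Pp: "nc_prime_ideal (P n) A" for n
      unfolding P_def by (rule ker_prime[OF assms(1) Fhom Fsur])
    have Pm: "P n \<subseteq> P (Suc n)" for n
      using f0 by (auto simp: P_def F_def)
    obtain N where N: "\<forall>n\<ge>N. P n = P N"
      using assms(2) Pp Pm unfolding acc_prime_ideals_def by blast
    obtain x where x: "x \<in> J" "x \<noteq> \<zero>"
      using Jnz J.additive_subgroup_axioms additive_subgroup.zero_closed by blast
    have xc: "x \<in> carrier A" using J.Icarr[OF x(1)] .
    then obtain y where y: "y \<in> carrier A" "x = F N y" using Fsur[of N] by blast
    have "F (Suc N) y = \<zero>" using y fker[OF xc] x by (simp add: F_def)
    hence "y \<in> P (Suc N)" using y by (simp add: P_def)
    hence "y \<in> P N" using N by (metis le_SucI order_refl)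
    hence "x = \<zero>" using y by (simp add: P_def)
    thus False using x by simp
  qed
qed


theorem mainTheorem2:
  fixes A :: "('a, 'b) ring_scheme"
  assumes "prime_ring A"
    and "acc_prime_ideals A"
  shows "hopfian A"
  using assms by (rule hopf_aux)

end
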